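(* Let $A=\begin{pmatrix}3&2&1&0\\2&3&2&1\\1&2&2&1\\0&1&1&1\end{pmatrix}$ and $f(x)=x^\top A x$ for $x\in\mathbb{Z}^4$. Then $f$ is multimodular, but its projection to $U=\{1,2,4\}$, namely $f^U(y_1,y_2,y_4)=\inf_{z\in\mathbb{Z}} f(y_1,y_2,z,y_4)$, regarded as a function of $(y_1,y_2,y_4)\in\mathbb{Z}^3$ in this order, is finite everywhere and is not multimodular. In particular, the projection of a multimodular function to a non-interval subset of variables need not be multimodular.
   Context: For $f:\mathbb{Z}^n\to\mathbb{R}\cup\{+\infty\}$, $\mathrm{dom}\, f=\{x\in\mathbb{Z}^n: f(x)<+\infty\}$. Let $e_i$ denote the $i$-th unit vector of $\mathbb{Z}^n$ and $\mathcal{F}=\{-e_1,\ e_1-e_2,\ e_2-e_3,\ \dots,\ e_{n-1}-e_n,\ e_n\}$. A function $f:\mathbb{Z}^n\to\mathbb{R}\cup\{+\infty\}$ is called multimodular if $\mathrm{dom}\, f\neq\emptyset$ and $f(z+d)+f(z+d')\ge f(z)+f(z+d+d')$ for all $z\in\mathrm{dom}\, f$ and all distinct $d,d'\in\mathcal{F}$ (with the usual conventions for $+\infty$). *)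

theory Defs
  imports "HOL-Library.Extended_Real"
begin

text \<open>Points of Z^n are represented as integer lists of length n; coordinate i
  (1-based in the paper) is the list entry at position i-1.
  Values in R extended by +infinity are represented in ereal.\<close>

definition vadd :: "int list \<Rightarrow> int list \<Rightarrow> int list" where
  "vadd x y = map2 (+) x y"

definition unitv :: "nat \<Rightarrow> nat \<Rightarrow> int list" where
  "unitv n i = map (\<lambda>k. if k = i - 1 then 1 else 0) [0..<n]"

definition vneg :: "int list \<Rightarrow> int list" where
  "vneg x = map uminus x"

definition mmF :: "nat \<Rightarrow> int list set" where
  "mmF n = {vneg (unitv n 1), unitv n n}
           \<union> {vadd (unitv n i) (vneg (unitv n (i+1))) | i. 1 \<le> i \<and> i < n}"

definition multimodular :: "nat \<Rightarrow> (int list \<Rightarrow> ereal) \<Rightarrow> bool" where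
  "multimodular n f \<longleftrightarrow>
     (\<forall>x. length x = n \<longrightarrow> f x \<noteq> -\<infinity>) \<and>
     (\<exists>x. length x = n \<and> f x < \<infinity>) \<and>
     (\<forall>z d d'. length z = n \<and> f z < \<infinity> \<and> d \<in> mmF n \<and> d' \<in> mmF n \<and> d \<noteq> d' \<longrightarrow>
        f (vadd z d) + f (vadd z d') \<ge> f z + f (vadd (vadd z d) d'))"

definition matA :: "nat \<Rightarrow> nat \<Rightarrow> int" where
  "matA i j = [[3,2,1,0],[2,3,2,1],[1,2,2,1],[0,1,1,1]] ! i ! j"

definition fA :: "int list \<Rightarrow> ereal" where
  "fA x = ereal (real_of_int (\<Sum>i<4. \<Sum>j<4. matA i j * x ! i * x ! j))"

definition fU :: "int list \<Rightarrow> ereal" where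
  "fU y = (INF z::int. fA [y ! 0, y ! 1, z, y ! 2])"

end

theory Submission
  imports Defs
begin

lemma fA4: "fA [a,b,c,e] = ereal (real_of_int (3*a*a+3*b*b+2*c*c+e*e+4*a*b+2*a*c+4*b*c+2*b*e+2*c*e))"
  unfolding fA_def matA_def
  by (simp add: eval_nat_numeral lessThan_Suc algebra_simps)

lemma mmF4: "mmF 4 = {[-1,0,0,0],[1,-1,0,0],[0,1,-1,0],[0,0,1,-1],[0,0,0,1]}"
proof -
  have "{i::nat. 1 \<le> i \<and> i < 4} = {1,2,3}" by auto
  hence "{vadd (unitv 4 i) (vneg (unitv 4 (i+1))) | i. 1 \<le> i \<and> i < 4}
        = (\<lambda>i. vadd (unitv 4 i) (vneg (unitv 4 (i+1)))) ` {1,2,3}" by blast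
  thus ?thesis unfolding mmF_def
    by (simp add: vadd_def vneg_def unitv_def upt_rec insert_commute)
qed

lemma mmF3: "mmF 3 = {[-1,0,0],[1,-1,0],[0,1,-1],[0,0,1]}"
proof -
  have "{i::nat. 1 \<le> i \<and> i < 3} = {1,2}" by auto
  hence "{vadd (unitv 3 i) (vneg (unitv 3 (i+1))) | i. 1 \<le> i \<and> i < 3}
        = (\<lambda>i. vadd (unitv 3 i) (vneg (unitv 3 (i+1)))) ` {1,2}" by blast
  thus ?thesis unfolding mmF_def
    by (simp add: vadd_def vneg_def unitv_def upt_rec insert_commute)
qed

lemma len4: "length z = 4 \<Longrightarrow> \<exists>a b c e. z = [a,b,c,e]"
  by (cases z rule: list.exhaust; simp; rename_tac a l; case_tac l; simp; rename_tac b l; case_tac l;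
      simp; rename_tac c l; case_tac l; simp)

lemma len3: "length z = 3 \<Longrightarrow> \<exists>a b e. z = [a,b,e]"
  by (cases z rule: list.exhaust; simp; rename_tac a l; case_tac l; simp; rename_tac b l; case_tac l;
      simp)

lemma minz: fixes z s :: int
  shows "2*z*z + 2*s*z \<ge> 2*(-(s div 2))*(-(s div 2)) + 2*s*(-(s div 2))"
proof -
  define k where "k = s div 2"
  define r where "r = s mod 2"
  have s: "s = 2*k + r" and r: "r = 0 \<or> r = 1" unfolding k_def r_def by auto
  have "(z+k)*(z+k+r) \<ge> 0"
  proof (cases "z + k \<ge> 0")
    case True then show ?thesis using r by auto
  next
    case False then have "z+k+r \<le> 0" using r by auto
    then show ?thesis using False by (simp add: mult_nonpos_nonpos)
  qed
  then show ?thesis unfolding k_def[symmetric] using s by (simp add: algebra_simps)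
qed

lemma fU3: "fU [a,b,e] = fA [a,b,-((a+2*b+e) div 2),e]"
proof -
  have "fU [a,b,e] = (INF z::int. fA [a,b,z,e])" by (simp add: fU_def)
  also have "\<dots> = fA [a,b,-((a+2*b+e) div 2),e]"
  proof (rule antisym)
    show "(INF z::int. fA [a,b,z,e]) \<le> fA [a,b,-((a+2*b+e) div 2),e]" by (rule INF_lower) simp
    show "fA [a,b,-((a+2*b+e) div 2),e] \<le> (INF z::int. fA [a,b,z,e])"
    proof (rule INF_greatest)
      fix z :: int
      have "2*z*z + 2*(a+2*b+e)*z \<ge> 2*(-((a+2*b+e) div 2))*(-((a+2*b+e) div 2)) + 2*(a+2*b+e)*(-((a+2*b+e) div 2))"
        by (rule minz)
      then show "fA [a,b,-((a+2*b+e) div 2),e] \<le> fA [a,b,z,e]"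
        unfolding fA4 ereal_less_eq(3) of_int_le_iff by (simp add: algebra_simps)
    qed
  qed
  finally show ?thesis .
qed

theorem mainTheorem10:
  shows "multimodular 4 fA \<and>
         (\<forall>y. length y = 3 \<longrightarrow> fU y \<noteq> \<infinity> \<and> fU y \<noteq> -\<infinity>) \<and>
         \<not> multimodular 3 fU"
proof (intro conjI)
  show "multimodular 4 fA"
    unfolding multimodular_def
  proof (intro conjI allI impI)
    fix x :: "int list" assume "length x = 4"
    then obtain a b c e where "x = [a,b,c,e]" using len4 by blast
    then show "fA x \<noteq> -\<infinity>" by (simp add: fA4)
  next
    show "\<exists>x. length x = 4 \<and> fA x < \<infinity>"
      by (rule exI[of _ "[0,0,0,0]"]) (simp add: fA4)
  next
    fix z d d' assume H: "length z = 4 \<and> fA z < \<infinity> \<and> d \<in> mmF 4 \<and> d' \<in> mmF 4 \<and> d \<noteq> d'"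
    then obtain a b c e where z: "z = [a,b,c,e]" using len4 by blast
    from H show "fA (vadd z d) + fA (vadd z d') \<ge> fA z + fA (vadd (vadd z d) d')"
      unfolding mmF4 z
      by (auto simp: vadd_def fA4 algebra_simps)
  qed
next
  show "\<forall>y. length y = 3 \<longrightarrow> fU y \<noteq> \<infinity> \<and> fU y \<noteq> -\<infinity>"
  proof (intro allI impI)
    fix y :: "int list" assume "length y = 3"
    then obtain a b e where "y = [a,b,e]" using len3 by blast
    then show "fU y \<noteq> \<infinity> \<and> fU y \<noteq> -\<infinity>" by (simp add: fU3 fA4)
  qed
next
  show "\<not> multimodular 3 fU"
  proof
    assume "multimodular 3 fU"
    then have "fU (vadd [-1,0,0] [1,-1,0]) + fU (vadd [-1,0,0] [0,1,-1])
        \<ge> fU [-1,0,0] + fU (vadd (vadd [-1,0,0] [1,-1,0]) [0,1,-1])"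
      unfolding multimodular_def mmF3
      by (elim conjE allE[of _ "[-1,0,0]"] allE[of _ "[1,-1,0]"] allE[of _ "[0,1,-1]"])
         (simp add: fU3 fA4)
    then show False by (simp add: vadd_def fU3 fA4)
  qed
qed

end
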